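(* Let $\alpha\in(0,1)$ be irrational with denominators $(q_n)$, and let $M_n=\lfloor (q_n-1)/2\rfloor$. Then $$P_{q_n}(\alpha)=\Theta\left(c_n\exp\Big(-2c_n\sum_{t=1}^{M_n-1}\frac{D_t(\alpha_n^-)}{t(t+1)}\Big)\right)\quad\text{as } n\to\infty.$$ That is, there are constants $0<c\le C$, independent of $n$, such that for all sufficiently large $n$ the quantity $P_{q_n}(\alpha)$ lies between $c$ and $C$ times the expression inside $\Theta$.
   Context: For real $\alpha$ and $N\in\mathbb N$ let $P_N(\alpha)=\prod_{r=1}^N|2\sin(\pi r\alpha)|$. Write $\alpha=[0;a_1,a_2,\ldots]$. Its convergents $p_n/q_n$ are indexed by $q_0=0$, $q_1=1$, $q_{n+1}=a_nq_n+q_{n-1}$ and $p_0=1$, $p_1=0$, $p_{n+1}=a_np_n+p_{n-1}$. Define $\alpha_n^+=[a_n;a_{n+1},a_{n+2},\ldots]$ and $\alpha_n^-=[0;a_{n-1},a_{n-2},\ldots,a_1]$; one has $\alpha_n^-=q_{n-1}/q_n$. Define $c_n=1/(\alpha_n^++\alpha_n^-)$. For real $\beta$ and $t\in\mathbb N$ let $D_t(\beta)=\sum_{s=1}^t\left(\{\beta s\}-\tfrac12\right)$, where $\{x\}$ denotes the fractional part of $x$. *)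

theory Defs
  imports Complex_Main
begin

definition P_prod :: "nat \<Rightarrow> real \<Rightarrow> real" where
  "P_prod N \<alpha> = (\<Prod>r=1..N. \<bar>2 * sin (pi * real r * \<alpha>)\<bar>)"

definition D_sum :: "nat \<Rightarrow> real \<Rightarrow> real" where
  "D_sum t \<beta> = (\<Sum>s=1..t. frac (\<beta> * real s) - 1/2)"

text \<open>Gauss map; (gauss ^^ (k-1)) alpha = [0; a_k, a_(k+1), ...].\<close>
definition gauss :: "real \<Rightarrow> real" where
  "gauss x = frac (1 / x)"

text \<open>Partial quotient a_k of alpha = [0; a_1, a_2, ...], for k >= 1.\<close>
definition cf_a :: "real \<Rightarrow> nat \<Rightarrow> nat" where
  "cf_a \<alpha> k = nat \<lfloor>1 / (gauss ^^ (k - 1)) \<alpha>\<rfloor>"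

fun cf_q :: "real \<Rightarrow> nat \<Rightarrow> nat" where
  "cf_q \<alpha> 0 = 0"
| "cf_q \<alpha> (Suc 0) = 1"
| "cf_q \<alpha> (Suc (Suc n)) = cf_a \<alpha> (Suc n) * cf_q \<alpha> (Suc n) + cf_q \<alpha> n"

fun fin_cf :: "nat list \<Rightarrow> real" where
  "fin_cf [] = 0"
| "fin_cf (b # bs) = 1 / (real b + fin_cf bs)"

text \<open>alpha_n^+ = [a_n; a_(n+1), ...] (n >= 1).\<close>
definition alpha_plus :: "real \<Rightarrow> nat \<Rightarrow> real" where
  "alpha_plus \<alpha> n = 1 / (gauss ^^ (n - 1)) \<alpha>"

definition alpha_minus :: "real \<Rightarrow> nat \<Rightarrow> real" where
  "alpha_minus \<alpha> n = fin_cf (rev (map (cf_a \<alpha>) [1..<n]))"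

definition cf_c :: "real \<Rightarrow> nat \<Rightarrow> real" where
  "cf_c \<alpha> n = 1 / (alpha_plus \<alpha> n + alpha_minus \<alpha> n)"

definition M_idx :: "real \<Rightarrow> nat \<Rightarrow> nat" where
  "M_idx \<alpha> n = (cf_q \<alpha> n - 1) div 2"

end

theory Submission
  imports Defs "HOL-Analysis.Analysis" "HOL-Computational_Algebra.Fundamental_Theorem_Algebra"
begin

lemma roots_unity_prod_aux:
  fixes q :: nat assumes q: "q \<ge> 1"
  shows "(\<Prod>j\<in>{1..<q}. (1 - exp (2 * of_real pi * \<i> * of_nat j / of_nat q))) = (of_nat q :: complex)"
proof -
  define \<omega> where "\<omega> = (\<lambda>j::nat. exp (2 * of_real pi * \<i> * of_nat j / of_nat q) :: complex)"
  define P where "P = [:-1:] + monom (1::complex) q"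
  have polyP: "poly P x = x ^ q - 1" for x by (simp add: P_def poly_monom)
  have lcP: "lead_coeff P = 1"
  proof -
    have d: "degree [:-1::complex:] < degree (monom (1::complex) q)" using q by (simp add: degree_monom_eq)
    have "lead_coeff ([:-1:] + monom (1::complex) q) = lead_coeff (monom (1::complex) q)"
      by (rule lead_coeff_add_le[OF d])
    also have "\<dots> = 1" by (rule lead_coeff_monom)
    finally show ?thesis unfolding P_def .
  qed
  have P0: "P \<noteq> 0" using lcP by auto
  have rsq: "rsquarefree P"
  proof (subst rsquarefree_roots, intro allI notI)
    fix a assume h: "poly P a = 0 \<and> poly (pderiv P) a = 0"
    have "pderiv P = monom (of_nat q) (q - 1)" unfolding P_def
      by (simp add: pderiv_add pderiv_monom pderiv_pCons)
    then have "of_nat q * a ^ (q - 1) = 0" using h by (simp add: poly_monom)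
    then have "a = 0" using q by auto
    then show False using h q by (simp add: polyP power_0_left)
  qed
  have dec: "(\<Prod>z|poly P z = 0. [:-z, 1:]) = P"
    using complex_poly_decompose_rsquarefree[OF rsq] lcP by simp
  have Z: "{z. poly P z = 0} = \<omega> ` {..<q}"
    using complex_roots_unity[OF q] by (auto simp: polyP \<omega>_def)
  have inj: "inj_on \<omega> {..<q}"
    using bij_betw_roots_unity[of q] by (auto simp: bij_betw_def \<omega>_def)
  have "(\<Prod>z|poly P z = 0. [:-z, 1:]) = (\<Prod>j<q. [:-\<omega> j, 1:])"
    unfolding Z by (subst prod.reindex[OF inj]) simp
  also have "{..<q} = insert 0 {1..<q}" using q by auto
  also have "(\<Prod>j\<in>insert 0 {1..<q}. [:-\<omega> j, 1:]) = [:-1, 1:] * (\<Prod>j\<in>{1..<q}. [:-\<omega> j, 1:])"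
    by (simp add: \<omega>_def)
  finally have e1: "[:-1, 1:] * (\<Prod>j\<in>{1..<q}. [:-\<omega> j, 1:]) = P" using dec by simp
  have e2: "[:-1, 1:] * (\<Sum>j<q. monom (1::complex) j) = P"
  proof -
    have "poly ([:-1, 1:] * (\<Sum>j<q. monom (1::complex) j)) = poly P"
    proof
      fix x :: complex
      show "poly ([:-1, 1:] * (\<Sum>j<q. monom (1::complex) j)) x = poly P x"
        by (simp add: polyP poly_sum poly_monom power_diff_1_eq algebra_simps)
    qed
    then show ?thesis by (simp add: poly_eq_poly_eq_iff)
  qed
  have "(\<Sum>j<q. monom (1::complex) j) = (\<Prod>j\<in>{1..<q}. [:-\<omega> j, 1:])"
    using e1 e2 by (metis mult_cancel_left pCons_eq_0_iff zero_neq_one)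
  then have "poly (\<Sum>j<q. monom (1::complex) j) 1 = poly (\<Prod>j\<in>{1..<q}. [:-\<omega> j, 1:]) 1" by simp
  then show ?thesis by (simp add: poly_sum poly_monom poly_prod \<omega>_def)
qed

lemma cmod_1_minus_cis: "cmod (1 - cis t) = 2 * \<bar>sin (t / 2)\<bar>"
proof -
  have c: "cos t = 1 - 2 * (sin (t/2))\<^sup>2" using cos_double_sin[of "t/2"] by simp
  have "(cmod (1 - cis t))\<^sup>2 = (1 - cos t)\<^sup>2 + (sin t)\<^sup>2"
    by (simp add: cmod_power2)
  also have "\<dots> = 2 - 2 * cos t" using sin_cos_squared_add[of t] by (simp add: power2_eq_square algebra_simps)
  also have "\<dots> = (2 * \<bar>sin (t / 2)\<bar>)\<^sup>2" by (simp add: c power2_eq_square)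
  finally show ?thesis
    by (metis abs_of_nonneg norm_ge_zero power2_eq_iff_nonneg abs_ge_zero mult_nonneg_nonneg zero_le_numeral)
qed

lemma prod_sin_eq:
  fixes q :: nat assumes q: "q \<ge> 1"
  shows "(\<Prod>k\<in>{1..<q}. 2 * sin (pi * real k / real q)) = real q"
proof -
  have "(\<Prod>k\<in>{1..<q}. 2 * sin (pi * real k / real q))
      = (\<Prod>k\<in>{1..<q}. cmod (1 - exp (2 * of_real pi * \<i> * of_nat k / of_nat q)))"
  proof (rule prod.cong[OF refl])
    fix k assume k: "k \<in> {1..<q}"
    have e: "exp (2 * of_real pi * \<i> * of_nat k / of_nat q) = cis (2 * pi * real k / real q)"
      by (simp add: cis_conv_exp mult_ac)
    have "sin (pi * real k / real q) > 0" using k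
      by (intro sin_gt_zero) (auto simp: field_simps)
    then show "2 * sin (pi * real k / real q) = cmod (1 - exp (2 * of_real pi * \<i> * of_nat k / of_nat q))"
      by (simp add: e cmod_1_minus_cis)
  qed
  also have "\<dots> = cmod (\<Prod>k\<in>{1..<q}. (1 - exp (2 * of_real pi * \<i> * of_nat k / of_nat q)))"
    by (simp add: prod_norm)
  also have "\<dots> = cmod (of_nat q :: complex)" by (subst roots_unity_prod_aux[OF q]) (rule refl)
  also have "\<dots> = real q" by simp
  finally show ?thesis .
qed



lemma mvt_abs:
  fixes g g' :: "real \<Rightarrow> real"
  assumes der: "\<And>w. min x y \<le> w \<Longrightarrow> w \<le> max x y \<Longrightarrow> DERIV g w :> g' w"
    and bnd: "\<And>w. min x y \<le> w \<Longrightarrow> w \<le> max x y \<Longrightarrow> \<bar>g' w\<bar> \<le> B"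
  shows "\<bar>g y - g x\<bar> \<le> B * \<bar>y - x\<bar>"
proof (cases x y rule: linorder_cases)
  case less
  then obtain z where z: "x < z" "z < y" "g y - g x = (y - x) * g' z"
    using MVT2[of x y g g'] der by auto
  have "\<bar>g' z\<bar> \<le> B" using bnd z less by auto
  then show ?thesis using z less by (simp add: abs_mult mult.commute mult_left_mono)
next
  case equal then show ?thesis by simp
next
  case greater
  then obtain z where z: "y < z" "z < x" "g x - g y = (x - y) * g' z"
    using MVT2[of y x g g'] der by auto
  have "\<bar>g' z\<bar> \<le> B" using bnd z greater by auto
  then show ?thesis using z greater by (simp add: abs_mult mult.commute mult_left_mono abs_minus_commute)
qed

lemma jordan:
  assumes "0 \<le> t" "t \<le> pi / 2"
  shows "2 * t / pi \<le> sin t"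
proof -
  have conc: "concave_on {0..pi/2} sin"
    by (rule f''_le0_imp_concave[where f'=cos and f''="\<lambda>x. - sin x"])
       (auto intro!: derivative_eq_intros sin_ge_zero)
  define l where "l = 2 * t / pi"
  have l: "0 \<le> l" "l \<le> 1" using assms by (auto simp: l_def field_simps)
  have "(1 - l) * sin 0 + l * sin (pi/2) \<le> sin ((1 - l) * 0 + l * (pi/2))"
    using concave_onD[OF conc l, of 0 "pi/2"] by auto
  moreover have "(1 - l) * 0 + l * (pi/2) = t" by (simp add: l_def)
  ultimately show ?thesis by (simp add: l_def)
qed

lemma sin_pi_lower:
  assumes "0 \<le> z" "z \<le> 1"
  shows "2 * min z (1 - z) \<le> sin (pi * z)"
proof (cases "z \<le> 1/2")
  case True
  then have "2 * (pi * z) / pi \<le> sin (pi * z)" using assms by (intro jordan) auto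
  then show ?thesis using True by auto
next
  case False
  then have "2 * (pi * (1 - z)) / pi \<le> sin (pi * (1 - z))" using assms by (intro jordan) auto
  moreover have "sin (pi * (1 - z)) = sin (pi * z)" by (simp add: right_diff_distrib sin_diff)
  ultimately show ?thesis using False by auto
qed

lemma sin_minus_id_bound: "\<bar>sin (t::real) - t\<bar> \<le> \<bar>t\<bar> ^ 3 / 6"
proof -
  have "(\<Sum>m<3. sin_coeff m * t ^ m) = t"
    by (simp add: eval_nat_numeral sin_coeff_def)
  then show ?thesis using Maclaurin_sin_bound[of t 3] by (simp add: eval_nat_numeral)
qed

lemma one_minus_cos_bound: "0 \<le> 1 - cos (t::real) \<and> 1 - cos t \<le> t\<^sup>2 / 2"
proof -
  have c: "cos t = 1 - 2 * (sin (t/2))\<^sup>2" using cos_double_sin[of "t/2"] by simp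
  have "\<bar>sin (t/2)\<bar> \<le> \<bar>t/2\<bar>" by (rule abs_sin_x_le_abs_x)
  then have "(sin (t/2))\<^sup>2 \<le> (t/2)\<^sup>2"
    by (metis abs_ge_zero power2_abs power_mono)
  then show ?thesis by (simp add: c power2_eq_square)
qed

lemma cot_bound:
  assumes "0 < x" "x \<le> 1/2"
  shows "\<bar>pi * cos (pi * x) / sin (pi * x) - 1 / x\<bar> \<le> 16"
proof -
  define t where "t = pi * x"
  have t: "0 < t" "t \<le> pi / 2" using assms by (auto simp: t_def)
  have st: "2 * t / pi \<le> sin t" using t by (intro jordan) auto
  have spos: "sin t > 0" using t by (intro sin_gt_zero) auto
  have "\<bar>t * cos t - sin t\<bar> \<le> t * (1 - cos t) + \<bar>sin t - t\<bar>"
  proof -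
    have "t * cos t - sin t = -(t * (1 - cos t)) + (t - sin t)" by (simp add: algebra_simps)
    moreover have "t * (1 - cos t) \<ge> 0" using one_minus_cos_bound[of t] t by simp
    ultimately show ?thesis by (smt (verit))
  qed
  also have "\<dots> \<le> t * (t\<^sup>2 / 2) + t ^ 3 / 6"
    using one_minus_cos_bound[of t] sin_minus_id_bound[of t] t
    by (intro add_mono mult_left_mono) auto
  also have "\<dots> \<le> t ^ 3" using t by (simp add: power2_eq_square power3_eq_cube)
  finally have num: "\<bar>t * cos t - sin t\<bar> \<le> t ^ 3" .
  have "pi * cos (pi * x) / sin (pi * x) - 1 / x = pi * (t * cos t - sin t) / (t * sin t)"
    using spos t assms by (simp add: t_def field_simps)
  also have "\<bar>\<dots>\<bar> = pi * \<bar>t * cos t - sin t\<bar> / (t * sin t)"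
    using spos t by (simp add: abs_divide abs_mult)
  also have "\<dots> \<le> pi * t ^ 3 / (t * (2 * t / pi))"
    using spos t num st by (intro frac_le mult_left_mono mult_pos_pos) auto
  also have "\<dots> = pi\<^sup>2 * t / 2" using t by (simp add: field_simps power2_eq_square power3_eq_cube)
  also have "\<dots> \<le> pi\<^sup>2 * (pi/2) / 2" using t by (intro divide_right_mono mult_left_mono) auto
  also have "\<dots> \<le> 4\<^sup>2 * (4/2) / 2" using pi_less_4 pi_gt3
    by (intro divide_right_mono mult_mono power_mono) auto
  finally show ?thesis by simp
qed



definition lf :: "real \<Rightarrow> real" where "lf x = ln (2 * sin (pi * x))"
definition lfd :: "real \<Rightarrow> real" where "lfd x = pi * cos (pi * x) / sin (pi * x)"

lemma lf_deriv: "sin (pi * x) > 0 \<Longrightarrow> DERIV lf x :> lfd x"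
  unfolding lf_def lfd_def
  by (auto intro!: derivative_eq_intros)

lemma lfd_deriv: "sin (pi * x) > 0 \<Longrightarrow> DERIV lfd x :> - (pi\<^sup>2 / (sin (pi * x))\<^sup>2)"
proof -
  assume s: "sin (pi * x) > 0"
  have e: "pi * pi * (cos (pi * x) * cos (pi * x) + sin (pi * x) * sin (pi * x)) = pi * pi"
    by simp
  have c: "(sin (pi * x))\<^sup>2 + (cos (pi * x))\<^sup>2 = 1" by (rule sin_cos_squared_add)
  have "DERIV lfd x :> pi * ((- sin (pi * x) * pi) * sin (pi * x) - cos (pi * x) * (cos (pi * x) * pi)) / (sin (pi * x))\<^sup>2"
    unfolding lfd_def using s
    by (auto intro!: derivative_eq_intros simp: power2_eq_square algebra_simps)
  also have "pi * ((- sin (pi * x) * pi) * sin (pi * x) - cos (pi * x) * (cos (pi * x) * pi)) = - (pi\<^sup>2 * ((sin (pi * x))\<^sup>2 + (cos (pi * x))\<^sup>2))"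
    by algebra
  also have "\<dots> = - (pi\<^sup>2)" by (simp only: c mult_1_right)
  finally show ?thesis by simp
qed

lemma sin_pos_m:
  assumes "0 < m" "m \<le> w" "w \<le> 1 - m"
  shows "sin (pi * w) \<ge> 2 * m"
proof -
  have "min w (1 - w) \<ge> m" using assms by auto
  then have "2 * m \<le> 2 * min w (1 - w)" by simp
  moreover have "2 * min w (1 - w) \<le> sin (pi * w)" using assms by (intro sin_pi_lower) auto
  ultimately show ?thesis by (rule order.trans)
qed

lemma lf_taylor:
  assumes m: "0 < m" and x: "m \<le> x" "x \<le> 1 - m" and y: "m \<le> y" "y \<le> 1 - m"
  shows "\<bar>lf y - lf x - lfd x * (y - x)\<bar> \<le> pi\<^sup>2 / (4 * m\<^sup>2) * (y - x)\<^sup>2"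
proof -
  define B where "B = pi\<^sup>2 / (4 * m\<^sup>2)"
  have inr: "m \<le> w \<and> w \<le> 1 - m" if "min x y \<le> w" "w \<le> max x y" for w
    using that x y by auto
  have d2: "\<bar>lfd w - lfd x\<bar> \<le> B * \<bar>w - x\<bar>" if "min x y \<le> w" "w \<le> max x y" for w
  proof (rule mvt_abs[where g' = "\<lambda>v. - (pi\<^sup>2 / (sin (pi * v))\<^sup>2)"])
    fix v assume v: "min x w \<le> v" "v \<le> max x w"
    then have vv: "m \<le> v" "v \<le> 1 - m" using inr[OF that] x by auto
    have s: "sin (pi * v) \<ge> 2 * m" by (rule sin_pos_m[OF m vv])
    then show "DERIV lfd v :> - (pi\<^sup>2 / (sin (pi * v))\<^sup>2)" using m by (intro lfd_deriv) auto
    have "(2 * m)\<^sup>2 \<le> (sin (pi * v))\<^sup>2" using s m by (intro power_mono) auto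
    moreover have "0 < (2 * m)\<^sup>2" using m by simp
    moreover have "0 < (sin (pi * v))\<^sup>2" using s m by simp
    ultimately have "pi\<^sup>2 / (sin (pi * v))\<^sup>2 \<le> pi\<^sup>2 / (2 * m)\<^sup>2"
      by (intro divide_left_mono mult_pos_pos) auto
    then show "\<bar>- (pi\<^sup>2 / (sin (pi * v))\<^sup>2)\<bar> \<le> B" by (simp add: B_def power_mult_distrib)
  qed
  have "\<bar>(lf y - lfd x * y) - (lf x - lfd x * x)\<bar> \<le> (B * \<bar>y - x\<bar>) * \<bar>y - x\<bar>"
  proof (rule mvt_abs[where g = "\<lambda>v. lf v - lfd x * v" and g' = "\<lambda>v. lfd v - lfd x"])
    fix w assume w: "min x y \<le> w" "w \<le> max x y"
    have s: "sin (pi * w) \<ge> 2 * m" using inr[OF w] by (intro sin_pos_m[OF m]) auto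
    show "DERIV (\<lambda>v. lf v - lfd x * v) w :> lfd w - lfd x"
      using s m by (auto intro!: derivative_eq_intros lf_deriv)
    have "\<bar>w - x\<bar> \<le> \<bar>y - x\<bar>" using w by auto
    then show "\<bar>lfd w - lfd x\<bar> \<le> B * \<bar>y - x\<bar>"
    proof -
      have "B \<ge> 0" by (simp add: B_def)
      then show ?thesis using d2[OF w] mult_left_mono[OF \<open>\<bar>w - x\<bar> \<le> \<bar>y - x\<bar>\<close> \<open>B \<ge> 0\<close>] by linarith
    qed
  qed
  moreover have "(lf y - lfd x * y) - (lf x - lfd x * x) = lf y - lf x - lfd x * (y - x)"
    by (simp add: algebra_simps)
  moreover have "(B * \<bar>y - x\<bar>) * \<bar>y - x\<bar> = pi\<^sup>2 / (4 * m\<^sup>2) * (y - x)\<^sup>2"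
    by (simp add: B_def power2_eq_square abs_mult_self_eq)
  ultimately show ?thesis by simp
qed

lemma lfd_bound:
  assumes "0 < x" "x < 1"
  shows "\<bar>lfd x - 1 / x + 1 / (1 - x)\<bar> \<le> 18"
proof (cases "x \<le> 1/2")
  case True
  have "\<bar>lfd x - 1 / x\<bar> \<le> 16" using cot_bound[of x] assms True by (simp add: lfd_def)
  moreover have "0 \<le> 1 / (1 - x)" "1 / (1 - x) \<le> 2" using assms True by (auto simp: field_simps)
  ultimately show ?thesis by linarith
next
  case False
  define y where "y = 1 - x"
  have y: "0 < y" "y \<le> 1/2" using False assms by (auto simp: y_def)
  have "lfd x = - lfd y"
    by (simp add: lfd_def y_def right_diff_distrib sin_diff cos_diff)
  moreover have "\<bar>lfd y - 1 / y\<bar> \<le> 16" using cot_bound[of y] y by (simp add: lfd_def)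
  moreover have "0 \<le> 1 / x" "1 / x \<le> 2" using assms False by (auto simp: field_simps)
  moreover have "1 / (1 - x) = 1 / y" by (simp add: y_def)
  ultimately show ?thesis by (simp only: abs_le_iff) linarith
qed



lemma abs_sin_shift: "\<bar>sin (x + pi * of_int m)\<bar> = \<bar>sin x\<bar>"
proof -
  have c: "(cos (pi * of_int m))\<^sup>2 = 1" using sin_cos_squared_add[of "pi * of_int m"] by simp
  then have "\<bar>cos (pi * of_int m)\<bar> = 1" by (metis abs_1 abs_power2 power2_eq_1_iff abs_neg_one)
  then show ?thesis by (simp add: sin_add abs_mult)
qed

fun cf_p :: "real \<Rightarrow> nat \<Rightarrow> nat" where
  "cf_p \<alpha> 0 = 1"
| "cf_p \<alpha> (Suc 0) = 0"
| "cf_p \<alpha> (Suc (Suc n)) = cf_a \<alpha> (Suc n) * cf_p \<alpha> (Suc n) + cf_p \<alpha> n"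

lemma irrat_inverse:
  assumes "(x::real) \<notin> \<rat>" shows "1 / x \<notin> \<rat>"
proof
  assume h: "1 / x \<in> \<rat>"
  have "1 / (1 / x) \<in> \<rat>" by (rule Rats_divide[OF Rats_1 h])
  then show False using assms by simp
qed

lemma irrat_frac: "(x::real) \<notin> \<rat> \<Longrightarrow> frac x \<notin> \<rat>"
proof
  assume "x \<notin> \<rat>" "frac x \<in> \<rat>"
  then have "frac x + of_int \<lfloor>x\<rfloor> \<in> \<rat>" by (intro Rats_add) auto
  then show False using \<open>x \<notin> \<rat>\<close> by (simp add: frac_def)
qed

lemma gauss_iter:
  assumes "0 < \<alpha>" "\<alpha> < 1" "\<alpha> \<notin> \<rat>"
  shows "0 < (gauss ^^ k) \<alpha> \<and> (gauss ^^ k) \<alpha> < 1 \<and> (gauss ^^ k) \<alpha> \<notin> \<rat>"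
proof (induction k)
  case 0 then show ?case using assms by simp
next
  case (Suc k)
  define x where "x = (gauss ^^ k) \<alpha>"
  have x: "0 < x" "x < 1" "x \<notin> \<rat>" using Suc by (auto simp: x_def)
  have "(gauss ^^ Suc k) \<alpha> = frac (1 / x)" by (simp add: x_def gauss_def)
  moreover have "1 / x \<notin> \<rat>" using x by (intro irrat_inverse)
  then have "frac (1 / x) \<notin> \<rat>" by (rule irrat_frac)
  moreover have "frac (1 / x) \<noteq> 0" using \<open>1 / x \<notin> \<rat>\<close> Ints_subset_Rats by auto
  ultimately show ?case using frac_ge_0[of "1/x"] frac_lt_1[of "1/x"] by auto
qed

locale cfrac =
  fixes \<alpha> :: real
  assumes a0: "0 < \<alpha>" and a1: "\<alpha> < 1" and airr: "\<alpha> \<notin> \<rat>"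
begin

abbreviation "xx k \<equiv> (gauss ^^ k) \<alpha>"
abbreviation "aa \<equiv> cf_a \<alpha>"
abbreviation "qq \<equiv> cf_q \<alpha>"
abbreviation "pp \<equiv> cf_p \<alpha>"
abbreviation "AP \<equiv> alpha_plus \<alpha>"

lemma xx: "0 < xx k" "xx k < 1" "xx k \<notin> \<rat>"
  using gauss_iter[OF a0 a1 airr, of k] by auto

lemma aa_eq: "real (aa (Suc k)) = of_int \<lfloor>1 / xx k\<rfloor>"
proof -
  have "1 / xx k > 1" using xx[of k] by (simp add: field_simps)
  then have h: "\<lfloor>1 / xx k\<rfloor> \<ge> 1" by (simp add: le_floor_iff)
  have d: "aa (Suc k) = nat \<lfloor>1 / xx k\<rfloor>" by (simp add: cf_a_def)
  have "real (nat \<lfloor>1 / xx k\<rfloor>) = of_int \<lfloor>1 / xx k\<rfloor>" by (rule of_nat_nat) (use h in linarith)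
  then show ?thesis by (simp only: d)
qed

lemma aa_ge1: "aa (Suc k) \<ge> 1"
proof -
  have "1 / xx k > 1" using xx[of k] by (simp add: field_simps)
  then have h: "\<lfloor>1 / xx k\<rfloor> \<ge> 1" by (simp add: le_floor_iff)
  have d: "aa (Suc k) = nat \<lfloor>1 / xx k\<rfloor>" by (simp add: cf_a_def)
  have "nat \<lfloor>1 / xx k\<rfloor> \<ge> nat 1" using h by (rule nat_mono)
  then show ?thesis by (simp only: d)
qed

lemma inv_xx: "1 / xx k = real (aa (Suc k)) + xx (Suc k)"
  by (simp add: aa_eq gauss_def frac_def)

lemma AP_eq: "AP (Suc k) = real (aa (Suc k)) + 1 / AP (Suc (Suc k))"
  by (simp add: alpha_plus_def inv_xx)

lemma AP_gt1: "AP (Suc k) > 1"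
  using xx[of k] by (simp add: alpha_plus_def field_simps)

lemma qq_pos: "qq (Suc n) \<ge> 1 \<and> qq (Suc (Suc n)) \<ge> Suc n"
proof (induction n)
  case 0 then show ?case using aa_ge1[of 0] by simp
next
  case (Suc n)
  have "qq (Suc (Suc (Suc n))) = aa (Suc (Suc n)) * qq (Suc (Suc n)) + qq (Suc n)" by (rule cf_q.simps(3))
  moreover have "aa (Suc (Suc n)) * qq (Suc (Suc n)) \<ge> qq (Suc (Suc n))"
    using aa_ge1[of "Suc n"] by simp
  ultimately show ?case using Suc.IH by linarith
qed

lemma qq_ge: "n \<ge> 1 \<Longrightarrow> qq n \<ge> n - 1" "n \<ge> 1 \<Longrightarrow> qq n \<ge> 1"
proof -
  assume "n \<ge> 1"
  then obtain m where m: "n = Suc m" by (cases n) auto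
  show "qq n \<ge> 1" using qq_pos[of m] m by simp
  show "qq n \<ge> n - 1"
  proof (cases m)
    case 0 then show ?thesis using m by simp
  next
    case (Suc k) then show ?thesis using qq_pos[of k] m by simp
  qed
qed

lemma qq_lt: "qq (Suc (Suc m)) < qq (Suc (Suc (Suc m)))"
proof -
  have "qq (Suc (Suc (Suc m))) = aa (Suc (Suc m)) * qq (Suc (Suc m)) + qq (Suc m)" by (rule cf_q.simps(3))
  moreover have "aa (Suc (Suc m)) * qq (Suc (Suc m)) \<ge> qq (Suc (Suc m))"
    using aa_ge1[of "Suc m"] by simp
  ultimately show ?thesis using qq_pos[of m] by linarith
qed

lemma det: "int (pp (Suc n)) * int (qq n) - int (pp n) * int (qq (Suc n)) = (-1) ^ Suc n"
proof (induction n)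
  case 0 then show ?case by simp
next
  case (Suc n)
  have "int (pp (Suc (Suc n))) * int (qq (Suc n)) - int (pp (Suc n)) * int (qq (Suc (Suc n)))
      = - (int (pp (Suc n)) * int (qq n) - int (pp n) * int (qq (Suc n)))"
    by (simp add: algebra_simps)
  then show ?case using Suc.IH by simp
qed

lemma conv: "\<alpha> = (real (pp (Suc m)) * AP (Suc m) + real (pp m)) / (real (qq (Suc m)) * AP (Suc m) + real (qq m))"
proof (induction m)
  case 0 then show ?case by (simp add: alpha_plus_def)
next
  case (Suc m)
  define A where "A = AP (Suc (Suc m))"
  have A: "A > 1" using AP_gt1 by (simp add: A_def)
  define a where "a = real (aa (Suc m))"
  have e: "AP (Suc m) = a + 1 / A" unfolding A_def a_def by (rule AP_eq)
  have q1: "real (qq (Suc m)) \<ge> 1" using qq_ge(2)[of "Suc m"] by simp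
  have a1: "a \<ge> 1" using aa_ge1[of m] by (simp add: a_def)
  have den: "real (qq (Suc m)) * (a + 1 / A) + real (qq m) > 0"
    using q1 a1 A by (smt (verit) divide_pos_pos mult_pos_pos of_nat_0_le_iff)
  have "\<alpha> = (real (pp (Suc m)) * (a + 1 / A) + real (pp m)) / (real (qq (Suc m)) * (a + 1 / A) + real (qq m))"
    by (rule Suc.IH[unfolded e])
  also have "\<dots> = ((real (pp (Suc m)) * (a + 1 / A) + real (pp m)) * A) / ((real (qq (Suc m)) * (a + 1 / A) + real (qq m)) * A)"
    using A by simp
  also have "\<dots> = (real (pp (Suc (Suc m))) * A + real (pp (Suc m))) / (real (qq (Suc (Suc m))) * A + real (qq (Suc m)))"
    using A by (simp add: a_def algebra_simps)
  finally show ?case by (simp add: A_def)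
qed

lemma alpha_minus_eq: "alpha_minus \<alpha> (Suc m) = real (qq m) / real (qq (Suc m))"
proof (induction m)
  case 0 then show ?case by (simp add: alpha_minus_def)
next
  case (Suc m)
  have "rev (map aa [1..<Suc (Suc m)]) = aa (Suc m) # rev (map aa [1..<Suc m])" by simp
  then have "alpha_minus \<alpha> (Suc (Suc m)) = 1 / (real (aa (Suc m)) + alpha_minus \<alpha> (Suc m))"
    by (simp add: alpha_minus_def)
  also have "\<dots> = 1 / (real (aa (Suc m)) + real (qq m) / real (qq (Suc m)))" using Suc.IH by simp
  also have "\<dots> = real (qq (Suc m)) / (real (aa (Suc m)) * real (qq (Suc m)) + real (qq m))"
    using qq_ge(2)[of "Suc m"] by (simp add: field_simps)
  also have "\<dots> = real (qq (Suc m)) / real (qq (Suc (Suc m)))" by simp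
  finally show ?case .
qed

end



lemma sum_rev_1q:
  fixes g :: "nat \<Rightarrow> real"
  shows "(\<Sum>k\<in>{1..<q}. g (q - k)) = (\<Sum>k\<in>{1..<q}. g k)"
  by (rule sum.reindex_bij_witness[where i = "\<lambda>k. q - k" and j = "\<lambda>k. q - k"]) auto

lemma sum_inv_sq_le: "(\<Sum>k\<in>{1..<N}. 1 / (real k)\<^sup>2) \<le> 2 - 1 / real (max 1 (N - 1))"
proof (induction N)
  case 0 then show ?case by simp
next
  case (Suc N)
  show ?case
  proof (cases "N \<le> 1")
    case True
    then have "N = 0 \<or> N = 1" by auto
    then show ?thesis by auto
  next
    case False
    then have N: "N \<ge> 2" by simp
    have "(\<Sum>k\<in>{1..<Suc N}. 1 / (real k)\<^sup>2) = (\<Sum>k\<in>{1..<N}. 1 / (real k)\<^sup>2) + 1 / (real N)\<^sup>2"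
      using N by simp
    also have "\<dots> \<le> 2 - 1 / real (max 1 (N - 1)) + 1 / (real N)\<^sup>2" using Suc.IH by simp
    also have "\<dots> \<le> 2 - 1 / real N"
    proof -
      have N2: "N \<ge> 2" using N by simp
      then have m: "real (max 1 (N - 1)) = real N - 1" by (simp add: of_nat_diff)
      have "1 / (real N)\<^sup>2 \<le> 1 / (real N - 1) - 1 / real N"
        using N2 by (simp add: field_simps power2_eq_square)
      then show ?thesis unfolding m by simp
    qed
    also have "\<dots> = 2 - 1 / real (max 1 (Suc N - 1))" using N by simp
    finally show ?thesis .
  qed
qed

lemma sum_inv_sq_le2: "(\<Sum>k\<in>{1..<N}. 1 / (real k)\<^sup>2) \<le> 2"
  using sum_inv_sq_le[of N] by (smt (verit) divide_nonneg_nonneg of_nat_0_le_iff)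

lemma abel_sum:
  fixes w :: "nat \<Rightarrow> real"
  shows "(\<Sum>k\<in>{1..N}. w k / real k)
       = (\<Sum>t\<in>{1..<N}. (\<Sum>s\<in>{1..t}. w s) / (real t * (real t + 1))) + (\<Sum>s\<in>{1..N}. w s) / real N"
proof (induction N)
  case 0 then show ?case by simp
next
  case (Suc N)
  define D where "D = (\<Sum>s\<in>{1..N}. w s)"
  have "(\<Sum>k\<in>{1..Suc N}. w k / real k) = (\<Sum>k\<in>{1..N}. w k / real k) + w (Suc N) / real (Suc N)"
    by simp
  also have "\<dots> = (\<Sum>t\<in>{1..<N}. (\<Sum>s\<in>{1..t}. w s) / (real t * (real t + 1))) + D / real N + w (Suc N) / real (Suc N)"
    using Suc.IH by (simp add: D_def)
  also have "\<dots> = (\<Sum>t\<in>{1..<Suc N}. (\<Sum>s\<in>{1..t}. w s) / (real t * (real t + 1))) + (D + w (Suc N)) / real (Suc N)"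
  proof (cases "N = 0")
    case True then show ?thesis by (simp add: D_def)
  next
    case False
    have "(\<Sum>t\<in>{1..<Suc N}. (\<Sum>s\<in>{1..t}. w s) / (real t * (real t + 1)))
        = (\<Sum>t\<in>{1..<N}. (\<Sum>s\<in>{1..t}. w s) / (real t * (real t + 1))) + D / (real N * (real N + 1))"
      using False by (simp add: D_def)
    moreover have "D / real N + w (Suc N) / real (Suc N) = D / (real N * (real N + 1)) + (D + w (Suc N)) / real (Suc N)"
    proof -
      have n1: "real N + 1 \<noteq> 0" by simp
      have a: "D / (real N * (real N + 1)) + D / (real N + 1) = D / real N"
      proof -
        have nz: "real N \<noteq> 0" using False by simp
        have "D / (real N + 1) = D * real N / (real N * (real N + 1))" using nz n1 by simp
        then have "D / (real N * (real N + 1)) + D / (real N + 1) = (D + D * real N) / (real N * (real N + 1))"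
          by (simp add: add_divide_distrib add.commute)
        also have "D + D * real N = D * (real N + 1)" by (simp add: algebra_simps)
        also have "D * (real N + 1) / (real N * (real N + 1)) = D / real N" using n1 by simp
        finally show ?thesis .
      qed
      have b: "(D + w (Suc N)) / real (Suc N) = D / (real N + 1) + w (Suc N) / (real N + 1)"
        by (simp add: add_divide_distrib add.commute)
      have c: "real (Suc N) = real N + 1" by simp
      show ?thesis unfolding c using a b[unfolded c] by linarith
    qed
    ultimately show ?thesis by simp
  qed
  also have "D + w (Suc N) = (\<Sum>s\<in>{1..Suc N}. w s)" by (simp add: D_def)
  finally show ?case .
qed



locale core =
  fixes q q' p s :: nat and e :: int and \<alpha> A c :: real
  assumes q4: "q \<ge> 4" and q'1: "1 \<le> q'" and q'q: "q' < q"
    and e1: "e = 1 \<or> e = -1"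
    and s_def: "s = (if e = 1 then q' else q - q')"
    and ps: "(p * s) mod q = 1"
    and A1: "A > 1"
    and c_def: "c = 1 / (A + real q' / real q)"
    and th: "real q * \<alpha> - real p = - of_int e * c / real q"
begin

definition "\<beta> = real q' / real q"
definition "rr k = (k * s) mod q"
definition "u k = real (rr k) / real q"
definition "w k = frac (\<beta> * real k) - 1 / 2"
definition "h k = - of_int e * c * u k / real q"
definition "y k = real k / real q + h k"
definition "dd k = min k (q - k)"

lemma qpos: "real q > 0" using q4 by simp

lemma beta: "0 < \<beta>" "\<beta> < 1" using q'1 q'q q4 by (auto simp: \<beta>_def field_simps)

lemma c_props: "0 < c" "c < 1" "c * \<beta> \<le> 1 / 2"
proof -
  have b: "0 < \<beta>" "\<beta> < 1" by (rule beta)+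
  have cb: "c = 1 / (A + \<beta>)" by (simp add: c_def \<beta>_def)
  show "0 < c" using A1 b by (simp add: cb)
  show "c < 1" using A1 b by (simp add: cb)
  have "\<beta> / (A + \<beta>) \<le> 1 / 2" using A1 b by (simp add: field_simps)
  then show "c * \<beta> \<le> 1 / 2" by (simp add: cb)
qed

lemma rr_props:
  assumes k: "k \<in> {1..<q}"
  shows "rr k \<in> {1..<q}" "(rr k * p) mod q = k"
proof -
  have inv: "(rr k * p) mod q = k"
  proof -
    have "(rr k * p) mod q = (k * s * p) mod q" unfolding rr_def by (rule mod_mult_left_eq)
    also have "k * s * p = k * (p * s)" by (simp only: mult_ac)
    also have "(k * (p * s)) mod q = (k * ((p * s) mod q)) mod q" by (rule mod_mult_right_eq[symmetric])
    also have "\<dots> = k" using ps k by simp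
    finally show ?thesis .
  qed
  show "(rr k * p) mod q = k" by (rule inv)
  have "rr k < q" using q4 by (simp add: rr_def)
  moreover have "rr k \<noteq> 0"
  proof
    assume "rr k = 0"
    then have "k = 0" using inv by simp
    then show False using k by simp
  qed
  ultimately show "rr k \<in> {1..<q}" by auto
qed

lemma u_props:
  assumes k: "k \<in> {1..<q}" shows "0 < u k \<and> u k < 1"
proof -
  have r: "1 \<le> rr k" "rr k < q" using rr_props(1)[OF k] by auto
  then have "real (rr k) < real q" "0 < real (rr k)" by auto
  then show ?thesis using qpos by (simp add: u_def)
qed

lemma frac_shift: "0 \<le> v \<Longrightarrow> v < 1 \<Longrightarrow> frac (of_int N + v) = v"
  by (simp only: frac_add_of_int_left frac_eq)

lemma frac_shift_neg: "0 < v \<Longrightarrow> v < 1 \<Longrightarrow> frac (of_int N - v) = 1 - v"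
proof -
  assume v: "0 < v" "v < 1"
  have "v \<notin> \<int>"
  proof
    assume "v \<in> \<int>" then obtain z where "v = of_int z" by (auto elim: Ints_cases)
    with v show False by auto
  qed
  have "of_int N - v = of_int N + (- v)" by simp
  then have "frac (of_int N - v) = frac (- v)" by (simp only: frac_add_of_int_left)
  also have "\<dots> = 1 - frac v" using \<open>v \<notin> \<int>\<close> by (simp add: frac_neg)
  also have "frac v = v" using v by (simp add: frac_eq)
  finally show ?thesis .
qed

lemma eu_w:
  assumes k: "k \<in> {1..<q}"
  shows "of_int e * u k = w k + of_int e / 2"
proof -
  have u: "0 < u k" "u k < 1" using u_props[OF k] by auto
  define N where "N = (k * s) div q"
  define R where "R = rr k"
  have uR: "u k = real R / real q" by (simp add: u_def R_def)
  have dm: "k * s = q * N + R" by (simp add: N_def R_def rr_def)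
  show ?thesis
  proof (cases "e = 1")
    case True
    then have ss: "s = q'" by (simp add: s_def)
    have "\<beta> * real k = real N + u k"
    proof -
      have "real (k * q') = real q * real N + real R"
        using arg_cong[OF dm[unfolded ss], of real] by simp
      then show ?thesis using qpos by (simp add: \<beta>_def uR field_simps)
    qed
    then have "frac (\<beta> * real k) = u k"
      using frac_shift[of "u k" "int N"] u by simp
    then show ?thesis using True by (simp add: w_def)
  next
    case False
    then have ee: "e = -1" using e1 by simp
    then have ss: "s = q - q'" by (simp add: s_def)
    have "\<beta> * real k = real_of_int (int k - int N) - u k"
    proof -
      have "real (k * (q - q')) = real q * real N + real R"
        using arg_cong[OF dm[unfolded ss], of real] by simp
      then have "real k * (real q - real q') = real q * real N + real R"
        using q'q by (simp add: of_nat_diff)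
      then show ?thesis using qpos by (simp add: \<beta>_def uR field_simps)
    qed
    then have "frac (\<beta> * real k) = 1 - u k"
      using frac_shift_neg[of "u k" "int k - int N"] u by simp
    then show ?thesis using ee by (simp add: w_def)
  qed
qed

end



lemma lfd_sym: "lfd (1 - x) = - lfd x"
  by (simp add: lfd_def right_diff_distrib sin_diff cos_diff)

context core
begin

lemma h_bound: "k \<in> {1..<q} \<Longrightarrow> \<bar>h k\<bar> = c * u k / real q"
  using u_props[of k] c_props e1 qpos by (auto simp: h_def abs_mult)

lemma h_bound2: "k \<in> {1..<q} \<Longrightarrow> \<bar>h k\<bar> \<le> 1 / real q"
proof -
  assume k: "k \<in> {1..<q}"
  have "c * u k \<le> 1" using u_props[OF k] c_props by (intro mult_le_one) auto
  then show ?thesis using h_bound[OF k] qpos by (simp add: divide_right_mono)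
qed

lemma rr_1: "e = 1 \<Longrightarrow> rr 1 = q'"
  unfolding rr_def using q'q by (simp add: s_def)

lemma rr_qm1: "e = -1 \<Longrightarrow> rr (q - 1) = q'"
proof -
  assume ee: "e = -1"
  then have ss: "s = q - q'" using e1 by (simp add: s_def)
  obtain d where d: "q = q' + Suc d" using q'q by (metis add_Suc_right less_iff_Suc_add)
  have "(q - 1) * s = q' + q * d"
    unfolding ss d by (simp add: algebra_simps)
  then have "((q - 1) * s) mod q = q' mod q" by simp
  then show ?thesis using q'q by (simp add: rr_def)
qed

lemma y_bounds:
  assumes k: "k \<in> {1..<q}"
  shows "real (dd k) / (2 * real q) \<le> y k" "y k \<le> 1 - real (dd k) / (2 * real q)"
    "real (dd k) / (2 * real q) \<le> real k / real q" "real k / real q \<le> 1 - real (dd k) / (2 * real q)"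
    "0 < real (dd k) / (2 * real q)"
proof -
  have kk: "1 \<le> k" "k < q" using k by auto
  have hb: "\<bar>h k\<bar> \<le> 1 / real q" by (rule h_bound2[OF k])
  have Q: "real q \<ge> 4" using q4 by simp
  have ddk: "dd k \<le> k" "dd k \<le> q - k" "dd k \<ge> 1" using kk by (auto simp: dd_def)
  have ddr: "real (dd k) \<le> real k" "real (dd k) \<le> real q - real k" "real (dd k) \<ge> 1"
    using ddk kk by (auto simp: of_nat_diff)
  show "0 < real (dd k) / (2 * real q)" using ddr Q by simp
  show "real (dd k) / (2 * real q) \<le> real k / real q"
    using ddr Q by (simp add: field_simps)
  show "real k / real q \<le> 1 - real (dd k) / (2 * real q)"
    using ddr Q by (simp add: field_simps)
  have yd: "y k = real k / real q + h k" by (simp add: y_def)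
  show "real (dd k) / (2 * real q) \<le> y k"
  proof (cases "k \<ge> 2")
    case True
    have "real (dd k) / (2 * real q) \<le> (real k - 1) / real q"
      using ddr True Q by (simp add: field_simps)
    also have "\<dots> \<le> y k" using hb yd by (simp add: diff_divide_distrib)
    finally show ?thesis .
  next
    case False
    then have k1: "k = 1" using kk by simp
    have d1: "real (dd k) = 1" using k1 q4 by (simp add: dd_def)
    show ?thesis
    proof (cases "e = 1")
      case True
      have "u k = \<beta>" using rr_1[OF True] k1 by (simp add: u_def \<beta>_def)
      then have "h k = - (c * \<beta>) / real q" using True h_def[of k] by simp
      moreover have "c * \<beta> \<le> 1/2" by (rule c_props)
      moreover have "c * \<beta> / real q \<le> (1/2) / real q" using c_props(3) qpos by (intro divide_right_mono) auto
      ultimately have "h k \<ge> - (1/2) / real q" by simp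
      then show ?thesis using yd k1 d1 Q by (simp add: field_simps)
    next
      case False
      then have "e = -1" using e1 by simp
      then have "h k \<ge> 0" using u_props[OF k] c_props qpos h_def[of k] by simp
      then have "y k \<ge> 1 / real q" using yd k1 by simp
      moreover have "1 / (2 * real q) \<le> 1 / real q" using Q by (simp add: field_simps)
      ultimately show ?thesis using d1 by simp
    qed
  qed
  show "y k \<le> 1 - real (dd k) / (2 * real q)"
  proof (cases "k \<le> q - 2")
    case True
    then have "real k \<le> real q - 2" using q4 by (simp add: of_nat_diff)
    then have "real (dd k) / (2 * real q) \<le> (real q - real k - 1) / real q"
      using ddr Q by (simp add: field_simps)
    also have "\<dots> \<le> 1 - y k"
    proof -
      have "h k \<le> 1 / real q" using hb abs_le_D1 order_trans by blast
      moreover have "(real q - real k - 1) / real q = 1 - real k / real q - 1 / real q"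
        using qpos by (simp add: field_simps)
      ultimately show ?thesis using yd by linarith
    qed
    finally show ?thesis by simp
  next
    case False
    then have k1: "k = q - 1" using kk by simp
    have d1: "real (dd k) = 1" using k1 q4 by (simp add: dd_def)
    have rk: "real k = real q - 1" using k1 q4 by (simp add: of_nat_diff)
    show ?thesis
    proof (cases "e = 1")
      case True
      then have "h k \<le> 0" using u_props[OF k] c_props qpos h_def[of k] by simp
      moreover have "real k / real q = 1 - 1 / real q" using rk qpos by (simp add: field_simps)
      ultimately have "y k \<le> 1 - 1 / real q" using yd by simp
      moreover have "1 / (2 * real q) \<le> 1 / real q" using Q by (simp add: field_simps)
      ultimately show ?thesis using d1 by simp
    next
      case False
      then have ee: "e = -1" using e1 by simp
      have "u k = \<beta>" using rr_qm1[OF ee] k1 by (simp add: u_def \<beta>_def)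
      then have "h k = (c * \<beta>) / real q" using ee h_def[of k] by simp
      moreover have "c * \<beta> \<le> 1/2" by (rule c_props)
      moreover have "c * \<beta> / real q \<le> (1/2) / real q" using c_props(3) qpos by (intro divide_right_mono) auto
      ultimately have "h k \<le> (1/2) / real q" by simp
      then show ?thesis using yd rk d1 Q by (simp add: field_simps)
    qed
  qed
qed

lemma y_in01: "k \<in> {1..<q} \<Longrightarrow> 0 < y k \<and> y k < 1"
  using y_bounds[of k] by (smt (verit))

lemma sin_rr:
  assumes k: "k \<in> {1..<q}"
  shows "\<bar>2 * sin (pi * real (rr k) * \<alpha>)\<bar> = 2 * sin (pi * y k)"
proof -
  define N where "N = (rr k * p) div q"
  have "rr k * p = (rr k * p) div q * q + (rr k * p) mod q" by (rule div_mult_mod_eq[symmetric])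
  then have dm: "rr k * p = N * q + k" unfolding N_def rr_props(2)[OF k] .
  have al: "\<alpha> = (real p - of_int e * c / real q) / real q" using th qpos by (simp add: field_simps)
  have "real (rr k) * \<alpha> = (real (rr k) * real p) / real q - of_int e * c * u k / real q"
    unfolding al u_def using qpos by (simp add: field_simps)
  also have "real (rr k) * real p = real N * real q + real k"
    using arg_cong[OF dm, of real] by simp
  finally have F: "real (rr k) * \<alpha> = (real N * real q + real k) / real q - of_int e * c * u k / real q" .
  have X: "(real N * real q + real k) / real q = real N + real k / real q" using qpos by (simp add: field_simps)
  have hh: "h k = - (of_int e * c * u k / real q)" by (simp add: h_def)
  have "real (rr k) * \<alpha> = y k + real N" unfolding y_def using F X hh by linarith
  then have "pi * real (rr k) * \<alpha> = pi * y k + pi * of_int (int N)" by (simp add: algebra_simps)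
  then have "\<bar>sin (pi * real (rr k) * \<alpha>)\<bar> = \<bar>sin (pi * y k)\<bar>" by (simp only: abs_sin_shift)
  moreover have "sin (pi * y k) > 0" using y_in01[OF k] by (intro sin_gt_zero) auto
  ultimately show ?thesis by (simp add: abs_mult)
qed

lemma w_bound: "\<bar>w k\<bar> \<le> 1 / 2"
  unfolding w_def abs_le_iff using frac_ge_0[of "\<beta> * real k"] frac_lt_1[of "\<beta> * real k"] by linarith

lemma w_rev:
  assumes k: "k \<in> {1..<q}"
  shows "w (q - k) = - w k"
proof -
  have fr: "frac (\<beta> * real k) \<noteq> 0"
  proof -
    have "of_int e * u k = w k + of_int e / 2" by (rule eu_w[OF k])
    then have "frac (\<beta> * real k) = u k \<or> frac (\<beta> * real k) = 1 - u k"
      using e1 by (auto simp: w_def)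
    then show ?thesis using u_props[OF k] by (smt (verit))
  qed
  then have ni: "\<beta> * real k \<notin> \<int>" by simp
  have "\<beta> * real (q - k) = of_int (int q') + (- (\<beta> * real k))"
    using k qpos by (simp add: of_nat_diff \<beta>_def field_simps)
  then have "frac (\<beta> * real (q - k)) = frac (- (\<beta> * real k))" by (simp only: frac_add_of_int_left)
  also have "\<dots> = 1 - frac (\<beta> * real k)" using ni by (simp add: frac_neg)
  finally show ?thesis by (simp add: w_def)
qed

end



context core
begin

definition "jj r = (r * p) mod q"

lemma jj_props:
  assumes r: "r \<in> {1..<q}"
  shows "rr (jj r) = r" "jj r \<in> {1..<q}"
proof -
  have "rr (jj r) = (r * p * s) mod q" unfolding rr_def jj_def by (rule mod_mult_left_eq)
  also have "r * p * s = r * (p * s)" by (simp only: mult_ac)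
  also have "(r * (p * s)) mod q = (r * ((p * s) mod q)) mod q" by (rule mod_mult_right_eq[symmetric])
  also have "\<dots> = r" using ps r by simp
  finally show i: "rr (jj r) = r" .
  have "jj r < q" using q4 by (simp add: jj_def)
  moreover have "jj r \<noteq> 0"
  proof
    assume "jj r = 0"
    then have "rr (jj r) = 0" by (simp add: rr_def)
    then show False using i r by simp
  qed
  ultimately show "jj r \<in> {1..<q}" by auto
qed

lemma prod_reindex:
  "(\<Prod>r\<in>{1..<q}. \<bar>2 * sin (pi * real r * \<alpha>)\<bar>) = (\<Prod>k\<in>{1..<q}. 2 * sin (pi * y k))"
proof (rule prod.reindex_bij_witness[where i = rr and j = jj])
  fix r assume r: "r \<in> {1..<q}"
  show "rr (jj r) = r" "jj r \<in> {1..<q}" using jj_props[OF r] by auto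
  show "2 * sin (pi * y (jj r)) = \<bar>2 * sin (pi * real r * \<alpha>)\<bar>"
    using sin_rr[OF jj_props(2)[OF r]] jj_props(1)[OF r] by simp
next
  fix k assume k: "k \<in> {1..<q}"
  show "jj (rr k) = k" using rr_props(2)[OF k] by (simp add: jj_def)
  show "rr k \<in> {1..<q}" by (rule rr_props(1)[OF k])
qed

lemma last_factor: "\<bar>2 * sin (pi * real q * \<alpha>)\<bar> = 2 * sin (pi * c / real q)"
proof -
  have al: "real q * \<alpha> = real p - of_int e * c / real q" using th by simp
  have "pi * real q * \<alpha> = pi * (real p - of_int e * c / real q)" using al by (simp add: mult.assoc)
  also have "\<dots> = - (pi * of_int e * c / real q) + pi * of_int (int p)" by (simp add: algebra_simps)
  finally have "pi * real q * \<alpha> = - (pi * of_int e * c / real q) + pi * of_int (int p)" .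
  then have "\<bar>sin (pi * real q * \<alpha>)\<bar> = \<bar>sin (- (pi * of_int e * c / real q))\<bar>"
    by (simp only: abs_sin_shift)
  also have "\<dots> = \<bar>sin (pi * c / real q)\<bar>" using e1 by auto
  also have "\<dots> = sin (pi * c / real q)"
  proof -
    have a: "0 < pi * c / real q" using c_props(1) qpos by simp
    have "c < real q" using c_props q4 by simp
    then have "pi * c < pi * real q" by simp
    then have b: "pi * c / real q < pi" using qpos by (simp add: divide_less_eq)
    have "sin (pi * c / real q) > 0" by (rule sin_gt_zero[OF a b])
    then show ?thesis by simp
  qed
  finally show ?thesis by (simp add: abs_mult)
qed

lemma sin_c_bounds: "4 * c / real q \<le> 2 * sin (pi * c / real q)" "2 * sin (pi * c / real q) \<le> 2 * pi * c / real q"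
proof -
  have t: "0 \<le> pi * c / real q" "pi * c / real q \<le> pi / 2"
    using c_props qpos q4 by (auto simp: field_simps)
  have "2 * (pi * c / real q) / pi \<le> sin (pi * c / real q)" by (rule jordan[OF t])
  then show "4 * c / real q \<le> 2 * sin (pi * c / real q)" by simp
  have "sin (pi * c / real q) \<le> pi * c / real q" by (rule sin_x_le_x[OF t(1)])
  then show "2 * sin (pi * c / real q) \<le> 2 * pi * c / real q" by simp
qed

lemma ln_P:
  "ln (P_prod q \<alpha>) = ln (2 * sin (pi * c / real q)) + (\<Sum>k\<in>{1..<q}. lf (y k))"
proof -
  have "{1..q} = insert q {1..<q}" using q4 by auto
  then have "P_prod q \<alpha> = \<bar>2 * sin (pi * real q * \<alpha>)\<bar> * (\<Prod>r\<in>{1..<q}. \<bar>2 * sin (pi * real r * \<alpha>)\<bar>)"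
    by (simp add: P_prod_def)
  also have "\<dots> = 2 * sin (pi * c / real q) * (\<Prod>k\<in>{1..<q}. 2 * sin (pi * y k))"
    by (simp only: last_factor prod_reindex)
  finally have P: "P_prod q \<alpha> = 2 * sin (pi * c / real q) * (\<Prod>k\<in>{1..<q}. 2 * sin (pi * y k))" .
  have pos: "2 * sin (pi * y k) > 0" if "k \<in> {1..<q}" for k
    using y_in01[OF that] by (auto intro!: sin_gt_zero)
  have s1: "2 * sin (pi * c / real q) > 0" using sin_c_bounds(1) c_props qpos by (smt (verit) divide_pos_pos)
  have pp: "(\<Prod>k\<in>{1..<q}. 2 * sin (pi * y k)) > 0" using pos by (intro prod_pos) auto
  have "ln (P_prod q \<alpha>) = ln (2 * sin (pi * c / real q)) + ln (\<Prod>k\<in>{1..<q}. 2 * sin (pi * y k))"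
    unfolding P by (rule ln_mult_pos[OF s1 pp])
  also have "ln (\<Prod>k\<in>{1..<q}. 2 * sin (pi * y k)) = (\<Sum>k\<in>{1..<q}. ln (2 * sin (pi * y k)))"
    using pos by (intro ln_prod) (auto simp: less_imp_neq[symmetric])
  finally show ?thesis by (simp add: lf_def)
qed

lemma sum_lf_x: "(\<Sum>k\<in>{1..<q}. lf (real k / real q)) = ln (real q)"
proof -
  have pos: "2 * sin (pi * real k / real q) > 0" if "k \<in> {1..<q}" for k
    using that qpos by (auto intro!: sin_gt_zero simp: field_simps)
  have "ln (real q) = ln (\<Prod>k\<in>{1..<q}. 2 * sin (pi * real k / real q))"
    using prod_sin_eq[of q] q4 by simp
  also have "\<dots> = (\<Sum>k\<in>{1..<q}. ln (2 * sin (pi * real k / real q)))"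
    using pos by (intro ln_prod) (auto simp: less_imp_neq[symmetric])
  finally show ?thesis by (simp add: lf_def)
qed

end



context core
begin

definition "xk k = real k / real q"

lemma taylor_k:
  assumes k: "k \<in> {1..<q}"
  shows "\<bar>lf (y k) - lf (xk k) - lfd (xk k) * h k\<bar> \<le> pi\<^sup>2 * (1 / (real k)\<^sup>2 + 1 / (real (q - k))\<^sup>2)"
proof -
  define m where "m = real (dd k) / (2 * real q)"
  have b: "m \<le> y k" "y k \<le> 1 - m" "m \<le> xk k" "xk k \<le> 1 - m" "0 < m"
    using y_bounds[OF k] by (auto simp: m_def xk_def)
  have yx: "y k - xk k = h k" by (simp add: y_def xk_def)
  have "\<bar>lf (y k) - lf (xk k) - lfd (xk k) * (y k - xk k)\<bar> \<le> pi\<^sup>2 / (4 * m\<^sup>2) * (y k - xk k)\<^sup>2"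
    using lf_taylor[OF b(5) b(3) b(4) b(1) b(2)] .
  also have "\<dots> \<le> pi\<^sup>2 / (4 * m\<^sup>2) * (1 / real q)\<^sup>2"
  proof -
    have "\<bar>h k\<bar> \<le> 1 / real q" by (rule h_bound2[OF k])
    then have "(h k)\<^sup>2 \<le> (1 / real q)\<^sup>2" by (metis abs_ge_zero power2_abs power_mono)
    then show ?thesis unfolding yx by (intro mult_left_mono) auto
  qed
  also have "\<dots> = pi\<^sup>2 / (real (dd k))\<^sup>2"
    using qpos b(5) by (simp add: m_def field_simps power2_eq_square)
  also have "\<dots> \<le> pi\<^sup>2 * (1 / (real k)\<^sup>2 + 1 / (real (q - k))\<^sup>2)"
  proof -
    have "dd k = k \<or> dd k = q - k" by (auto simp: dd_def min_def)
    then have "1 / (real (dd k))\<^sup>2 \<le> 1 / (real k)\<^sup>2 + 1 / (real (q - k))\<^sup>2" by auto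
    then show ?thesis by (simp add: divide_inverse mult_left_mono)
  qed
  finally show ?thesis unfolding yx .
qed

lemma R_bound:
  "\<bar>(\<Sum>k\<in>{1..<q}. lf (y k)) - (\<Sum>k\<in>{1..<q}. lf (xk k)) - (\<Sum>k\<in>{1..<q}. lfd (xk k) * h k)\<bar> \<le> 4 * pi\<^sup>2"
proof -
  have "\<bar>(\<Sum>k\<in>{1..<q}. lf (y k)) - (\<Sum>k\<in>{1..<q}. lf (xk k)) - (\<Sum>k\<in>{1..<q}. lfd (xk k) * h k)\<bar>
      = \<bar>\<Sum>k\<in>{1..<q}. lf (y k) - lf (xk k) - lfd (xk k) * h k\<bar>"
    by (simp add: sum_subtractf)
  also have "\<dots> \<le> (\<Sum>k\<in>{1..<q}. \<bar>lf (y k) - lf (xk k) - lfd (xk k) * h k\<bar>)" by (rule sum_abs)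
  also have "\<dots> \<le> (\<Sum>k\<in>{1..<q}. pi\<^sup>2 * (1 / (real k)\<^sup>2 + 1 / (real (q - k))\<^sup>2))"
    by (intro sum_mono taylor_k)
  also have "\<dots> = pi\<^sup>2 * ((\<Sum>k\<in>{1..<q}. 1 / (real k)\<^sup>2) + (\<Sum>k\<in>{1..<q}. 1 / (real (q - k))\<^sup>2))"
    by (simp only: sum_distrib_left[symmetric] sum.distrib)
  also have "(\<Sum>k\<in>{1..<q}. 1 / (real (q - k))\<^sup>2) = (\<Sum>k\<in>{1..<q}. 1 / (real k)\<^sup>2)"
    by (rule sum_rev_1q[where g = "\<lambda>k. 1 / (real k)\<^sup>2"])
  also have "pi\<^sup>2 * ((\<Sum>k\<in>{1..<q}. 1 / (real k)\<^sup>2) + (\<Sum>k\<in>{1..<q}. 1 / (real k)\<^sup>2)) \<le> pi\<^sup>2 * (2 + 2)"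
    using sum_inv_sq_le2[of q] by (intro mult_left_mono add_mono) auto
  finally show ?thesis by simp
qed

lemma sum_lfd_zero: "(\<Sum>k\<in>{1..<q}. lfd (xk k)) = 0"
proof -
  have "(\<Sum>k\<in>{1..<q}. lfd (xk k)) = (\<Sum>k\<in>{1..<q}. lfd (xk (q - k)))"
    by (rule sum_rev_1q[symmetric])
  also have "\<dots> = (\<Sum>k\<in>{1..<q}. - lfd (xk k))"
  proof (rule sum.cong[OF refl])
    fix k assume k: "k \<in> {1..<q}"
    have "xk (q - k) = 1 - xk k" using k qpos by (simp add: xk_def of_nat_diff field_simps)
    then show "lfd (xk (q - k)) = - lfd (xk k)" by (simp add: lfd_sym)
  qed
  finally show ?thesis by (simp add: sum_negf)
qed

definition "W = (\<Sum>k\<in>{1..<q}. w k / real k)"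

lemma L_eq: "(\<Sum>k\<in>{1..<q}. lfd (xk k) * h k) = - (c / real q) * (\<Sum>k\<in>{1..<q}. lfd (xk k) * w k)"
proof -
  have "(\<Sum>k\<in>{1..<q}. lfd (xk k) * h k) = (\<Sum>k\<in>{1..<q}. - (c / real q) * (lfd (xk k) * w k) - (c / real q) * (of_int e / 2) * lfd (xk k))"
  proof (rule sum.cong[OF refl])
    fix k assume k: "k \<in> {1..<q}"
    have "h k = - (c / real q) * (of_int e * u k)" by (simp add: h_def)
    also have "\<dots> = - (c / real q) * (w k + of_int e / 2)" by (simp only: eu_w[OF k])
    finally have hk: "h k = - (c / real q) * (w k + of_int e / 2)" .
    show "lfd (xk k) * h k = - (c / real q) * (lfd (xk k) * w k) - (c / real q) * (of_int e / 2) * lfd (xk k)"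
      unfolding hk by (simp add: algebra_simps)
  qed
  also have "\<dots> = - (c / real q) * (\<Sum>k\<in>{1..<q}. lfd (xk k) * w k) - (c / real q) * (of_int e / 2) * (\<Sum>k\<in>{1..<q}. lfd (xk k))"
    by (simp add: sum_subtractf sum_distrib_left)
  finally have X: "(\<Sum>k\<in>{1..<q}. lfd (xk k) * h k) = - (c / real q) * (\<Sum>k\<in>{1..<q}. lfd (xk k) * w k) - (c / real q) * (of_int e / 2) * (\<Sum>k\<in>{1..<q}. lfd (xk k))" .
  show ?thesis using X unfolding sum_lfd_zero by simp
qed

lemma lfdw_eq: "\<bar>(\<Sum>k\<in>{1..<q}. lfd (xk k) * w k) - 2 * real q * W\<bar> \<le> 9 * real q"
proof -
  define E where "E k = lfd (xk k) - real q / real k + real q / real (q - k)" for k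
  have Eb: "\<bar>E k\<bar> \<le> 18" if k: "k \<in> {1..<q}" for k
  proof -
    have x: "0 < xk k" "xk k < 1" using k qpos by (auto simp: xk_def field_simps)
    have "1 / xk k = real q / real k" by (simp add: xk_def)
    moreover have "1 / (1 - xk k) = real q / real (q - k)"
      using k qpos by (simp add: xk_def of_nat_diff field_simps)
    ultimately show ?thesis using lfd_bound[OF x] by (simp add: E_def)
  qed
  have split: "(\<Sum>k\<in>{1..<q}. lfd (xk k) * w k)
      = (\<Sum>k\<in>{1..<q}. real q / real k * w k) - (\<Sum>k\<in>{1..<q}. real q / real (q - k) * w k) + (\<Sum>k\<in>{1..<q}. E k * w k)"
    by (simp add: E_def algebra_simps sum.distrib sum_subtractf)
  have rev: "(\<Sum>k\<in>{1..<q}. real q / real (q - k) * w k) = - (\<Sum>k\<in>{1..<q}. real q / real k * w k)"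
  proof -
    have "(\<Sum>k\<in>{1..<q}. real q / real (q - k) * w k) = (\<Sum>k\<in>{1..<q}. real q / real (q - k) * w (q - (q - k)))"
      by (intro sum.cong refl) (auto simp: diff_diff_cancel)
    also have "\<dots> = (\<Sum>k\<in>{1..<q}. real q / real k * w (q - k))"
      by (rule sum_rev_1q[where g = "\<lambda>j. real q / real j * w (q - j)"])
    also have "\<dots> = (\<Sum>k\<in>{1..<q}. - (real q / real k * w k))"
      by (intro sum.cong refl) (simp add: w_rev)
    finally show ?thesis by (simp add: sum_negf)
  qed
  have WW: "(\<Sum>k\<in>{1..<q}. real q / real k * w k) = real q * W"
    by (simp add: W_def sum_distrib_left)
  have Eb2: "\<bar>\<Sum>k\<in>{1..<q}. E k * w k\<bar> \<le> 9 * real q"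
  proof -
    have "\<bar>\<Sum>k\<in>{1..<q}. E k * w k\<bar> \<le> (\<Sum>k\<in>{1..<q}. \<bar>E k * w k\<bar>)" by (rule sum_abs)
    also have "\<dots> \<le> (\<Sum>k\<in>{1..<q}. 9)"
    proof (rule sum_mono)
      fix k assume k: "k \<in> {1..<q}"
      have "\<bar>E k\<bar> * \<bar>w k\<bar> \<le> 18 * (1/2)" using Eb[OF k] w_bound[of k] by (intro mult_mono) auto
      then show "\<bar>E k * w k\<bar> \<le> 9" by (simp add: abs_mult)
    qed
    also have "\<dots> \<le> 9 * real q" by simp
    finally show ?thesis .
  qed
  show ?thesis using split rev WW Eb2 by simp
qed

end



context core
begin

definition "M = (q - 1) div 2"
definition "S = (\<Sum>t\<in>{1..<M}. D_sum t \<beta> / (real t * (real t + 1)))"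

lemma D_eq: "D_sum t \<beta> = (\<Sum>s\<in>{1..t}. w s)"
  by (simp add: D_sum_def w_def)

lemma D_bound: "\<bar>D_sum t \<beta>\<bar> \<le> real t / 2"
proof -
  have "\<bar>D_sum t \<beta>\<bar> \<le> (\<Sum>s\<in>{1..t}. \<bar>w s\<bar>)" unfolding D_eq by (rule sum_abs)
  also have "\<dots> \<le> (\<Sum>s\<in>{1..t}. 1 / 2)" by (intro sum_mono w_bound)
  also have "\<dots> = real t / 2" by simp
  finally show ?thesis .
qed

lemma W_abel: "W = (\<Sum>t\<in>{1..<q - 1}. D_sum t \<beta> / (real t * (real t + 1))) + D_sum (q - 1) \<beta> / real (q - 1)"
proof -
  have "{1..<q} = {1..q - 1}" using q4 by auto
  then have "W = (\<Sum>k\<in>{1..q - 1}. w k / real k)" by (simp add: W_def)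
  also have "\<dots> = (\<Sum>t\<in>{1..<q - 1}. (\<Sum>s\<in>{1..t}. w s) / (real t * (real t + 1))) + (\<Sum>s\<in>{1..q - 1}. w s) / real (q - 1)"
    by (rule abel_sum)
  finally show ?thesis by (simp only: D_eq)
qed

lemma W_S: "\<bar>W - S\<bar> \<le> 1"
proof -
  have M1: "1 \<le> M" "M \<le> q - 1" using q4 by (auto simp: M_def)
  define f where "f t = D_sum t \<beta> / (real t * (real t + 1))" for t
  have spl: "(\<Sum>t\<in>{1..<q - 1}. f t) = (\<Sum>t\<in>{1..<M}. f t) + (\<Sum>t\<in>{M..<q - 1}. f t)"
    using M1 by (simp add: sum.atLeastLessThan_concat)
  have tail: "\<bar>\<Sum>t\<in>{M..<q - 1}. f t\<bar> \<le> 1 / 2"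
  proof -
    have "\<bar>\<Sum>t\<in>{M..<q - 1}. f t\<bar> \<le> (\<Sum>t\<in>{M..<q - 1}. \<bar>f t\<bar>)" by (rule sum_abs)
    also have "\<dots> \<le> (\<Sum>t\<in>{M..<q - 1}. 1 / (2 * (real M + 1)))"
    proof (rule sum_mono)
      fix t assume t: "t \<in> {M..<q - 1}"
      then have t1: "real t \<ge> 1" "real t \<ge> real M" using M1 by auto
      have "\<bar>f t\<bar> = \<bar>D_sum t \<beta>\<bar> / (real t * (real t + 1))"
        using t1 by (simp add: f_def abs_divide abs_mult)
      also have "\<dots> \<le> (real t / 2) / (real t * (real t + 1))"
        using t1 D_bound[of t] by (intro divide_right_mono) auto
      also have "\<dots> = 1 / (2 * (real t + 1))"
      proof -
        have y0: "real t * (real t + 1) \<noteq> 0" using t1 by auto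
        have z0: "2 * (real t + 1) \<noteq> 0" using t1 by auto
        have "(real t / 2) * (2 * (real t + 1)) = 1 * (real t * (real t + 1))" by (simp add: algebra_simps)
        then show ?thesis by (simp only: frac_eq_eq[OF y0 z0])
      qed
      also have "\<dots> \<le> 1 / (2 * (real M + 1))" using t1 by (simp add: field_simps)
      finally show "\<bar>f t\<bar> \<le> 1 / (2 * (real M + 1))" .
    qed
    also have "\<dots> = real (q - 1 - M) / (2 * (real M + 1))" by simp
    also have "\<dots> \<le> 1 / 2"
    proof -
      have "q - 1 - M \<le> M + 1" by (simp add: M_def)
      then have "real (q - 1 - M) \<le> real M + 1" by linarith
      then show ?thesis by (simp add: field_simps)
    qed
    finally show ?thesis .
  qed
  have last: "\<bar>D_sum (q - 1) \<beta> / real (q - 1)\<bar> \<le> 1 / 2"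
  proof -
    have qq: "real (q - 1) > 0" using q4 by simp
    have "\<bar>D_sum (q - 1) \<beta> / real (q - 1)\<bar> = \<bar>D_sum (q - 1) \<beta>\<bar> / real (q - 1)" by (simp add: abs_divide)
    also have "\<dots> \<le> (real (q - 1) / 2) / real (q - 1)" using D_bound[of "q - 1"] qq by (intro divide_right_mono) auto
    also have "\<dots> = 1 / 2" using qq by simp
    finally show ?thesis .
  qed
  have "W - S = (\<Sum>t\<in>{M..<q - 1}. f t) + D_sum (q - 1) \<beta> / real (q - 1)"
    using W_abel spl by (simp add: S_def f_def)
  then have "\<bar>W - S\<bar> \<le> \<bar>\<Sum>t\<in>{M..<q - 1}. f t\<bar> + \<bar>D_sum (q - 1) \<beta> / real (q - 1)\<bar>"
    by (simp only: abs_triangle_ineq)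
  then show ?thesis using tail last by linarith
qed

lemma main_log_bound: "\<bar>ln (P_prod q \<alpha>) - (ln c - 2 * c * S)\<bar> \<le> 100"
proof -
  define Ls where "Ls = (\<Sum>k\<in>{1..<q}. lfd (xk k) * h k)"
  define Ly where "Ly = (\<Sum>k\<in>{1..<q}. lf (y k))"
  define Lx where "Lx = (\<Sum>k\<in>{1..<q}. lf (xk k))"
  define T1 where "T1 = ln (2 * sin (pi * c / real q))"
  have lnP: "ln (P_prod q \<alpha>) = T1 + Ly" using ln_P by (simp add: T1_def Ly_def)
  have Lxq: "Lx = ln (real q)" using sum_lf_x by (simp add: Lx_def xk_def)
  have R: "\<bar>Ly - Lx - Ls\<bar> \<le> 4 * pi\<^sup>2" using R_bound by (simp add: Ly_def Lx_def Ls_def)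
  have LW: "\<bar>Ls + 2 * c * W\<bar> \<le> 9"
  proof -
    have "Ls + 2 * c * W = - (c / real q) * ((\<Sum>k\<in>{1..<q}. lfd (xk k) * w k) - 2 * real q * W)"
      unfolding Ls_def L_eq using qpos by (simp add: field_simps)
    then have "\<bar>Ls + 2 * c * W\<bar> = (c / real q) * \<bar>(\<Sum>k\<in>{1..<q}. lfd (xk k) * w k) - 2 * real q * W\<bar>"
      using c_props qpos by (simp add: abs_mult)
    also have "\<dots> \<le> (c / real q) * (9 * real q)"
      using lfdw_eq c_props qpos by (intro mult_left_mono) auto
    also have "\<dots> = 9 * c" using qpos by simp
    also have "\<dots> \<le> 9" using c_props by simp
    finally show ?thesis .
  qed
  have WS: "\<bar>2 * c * W - 2 * c * S\<bar> \<le> 2"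
  proof -
    have "2 * c * W - 2 * c * S = (2 * c) * (W - S)" by (simp add: algebra_simps)
    then have "\<bar>2 * c * W - 2 * c * S\<bar> = \<bar>2 * c\<bar> * \<bar>W - S\<bar>" by (simp only: abs_mult)
    also have "\<bar>2 * c\<bar> = 2 * c" using c_props by simp
    finally have "\<bar>2 * c * W - 2 * c * S\<bar> = 2 * c * \<bar>W - S\<bar>" .
    also have "\<dots> \<le> 2 * 1 * 1" using W_S c_props by (intro mult_mono) auto
    finally show ?thesis by simp
  qed
  have T1b: "\<bar>T1 + ln (real q) - ln c\<bar> \<le> 2 * pi"
  proof -
    have cq: "0 < 4 * c / real q" using c_props qpos by simp
    have lo: "ln (4 * c / real q) \<le> T1" unfolding T1_def using sin_c_bounds(1) cq by simp
    have hi: "T1 \<le> ln (2 * pi * c / real q)" unfolding T1_def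
      using sin_c_bounds cq by (intro ln_le_cancel_iff[THEN iffD2]) auto
    have e1: "ln (4 * c / real q) = ln 4 + ln c - ln (real q)" using c_props qpos by (simp add: ln_div ln_mult)
    have e2: "ln (2 * pi * c / real q) = ln (2 * pi) + ln c - ln (real q)" using c_props qpos by (simp add: ln_div ln_mult)
    have "ln (4::real) \<ge> 0" by simp
    have "ln (2 * pi) \<le> 2 * pi - 1" by (rule ln_le_minus_one) simp
    then show ?thesis using lo hi e1 e2 \<open>ln (4::real) \<ge> 0\<close> by linarith
  qed
  have "ln (P_prod q \<alpha>) - (ln c - 2 * c * S) = (T1 + ln (real q) - ln c) + (Ly - Lx - Ls) + (Ls + 2 * c * W) - (2 * c * W - 2 * c * S)"
    using lnP Lxq by simp
  then have "\<bar>ln (P_prod q \<alpha>) - (ln c - 2 * c * S)\<bar> \<le> 2 * pi + 4 * pi\<^sup>2 + 9 + 2"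
    using T1b R LW WS by linarith
  also have "\<dots> \<le> 2 * 4 + 4 * 4\<^sup>2 + 9 + 2" using pi_less_4 pi_gt3
    by (intro add_mono mult_left_mono power_mono) auto
  finally show ?thesis by simp
qed

lemma P_pos: "P_prod q \<alpha> > 0"
proof -
  have "P_prod q \<alpha> \<ge> 0" by (simp add: P_prod_def prod_nonneg)
  moreover have "P_prod q \<alpha> \<noteq> 0"
  proof
    assume P0: "P_prod q \<alpha> = 0"
    have "{1..q} = insert q {1..<q}" using q4 by auto
    then have "P_prod q \<alpha> = \<bar>2 * sin (pi * real q * \<alpha>)\<bar> * (\<Prod>r\<in>{1..<q}. \<bar>2 * sin (pi * real r * \<alpha>)\<bar>)"
      by (simp add: P_prod_def)
    also have "\<dots> = 2 * sin (pi * c / real q) * (\<Prod>k\<in>{1..<q}. 2 * sin (pi * y k))"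
      by (simp only: last_factor prod_reindex)
    finally have P: "P_prod q \<alpha> = 2 * sin (pi * c / real q) * (\<Prod>k\<in>{1..<q}. 2 * sin (pi * y k))" .
    have pos: "2 * sin (pi * y k) > 0" if "k \<in> {1..<q}" for k
      using y_in01[OF that] by (auto intro!: sin_gt_zero)
    have s1: "2 * sin (pi * c / real q) > 0" using sin_c_bounds(1) c_props qpos by (smt (verit) divide_pos_pos)
    have pp: "(\<Prod>k\<in>{1..<q}. 2 * sin (pi * y k)) > 0" using pos by (intro prod_pos) auto
    show False using mult_pos_pos[OF s1 pp] P P0 by linarith
  qed
  ultimately show ?thesis by simp
qed

end



context core
begin

lemma sandwich:
  "exp (-100) * (c * exp (- 2 * c * S)) \<le> P_prod q \<alpha> \<and> P_prod q \<alpha> \<le> exp 100 * (c * exp (- 2 * c * S))"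
proof -
  define X where "X = ln c - 2 * c * S"
  define L where "L = ln (P_prod q \<alpha>)"
  have b: "\<bar>L - X\<bar> \<le> 100" unfolding L_def X_def by (rule main_log_bound)
  then have b1: "X + (-100) \<le> L" "L \<le> X + 100" by (simp_all only: abs_le_iff) linarith+
  have ce: "c * exp (- 2 * c * S) = exp X"
  proof -
    have "exp X = exp (ln c) * exp (- 2 * c * S)" unfolding X_def by (simp only: diff_conv_add_uminus mult_exp_exp mult_minus_left)
    also have "exp (ln c) = c" using c_props by simp
    finally show ?thesis by simp
  qed
  have pe: "exp L = P_prod q \<alpha>" unfolding L_def using P_pos by simp
  have "exp (-100) * (c * exp (- 2 * c * S)) = exp (X + (-100))" unfolding ce by (simp only: mult_exp_exp add.commute)
  also have "\<dots> \<le> exp L" using b1(1) by (simp only: exp_le_cancel_iff)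
  finally have 1: "exp (-100) * (c * exp (- 2 * c * S)) \<le> P_prod q \<alpha>" unfolding pe .
  have "exp L \<le> exp (X + 100)" using b1(2) by (simp only: exp_le_cancel_iff)
  also have "\<dots> = exp 100 * (c * exp (- 2 * c * S))" unfolding ce by (simp only: mult_exp_exp add.commute)
  finally have 2: "P_prod q \<alpha> \<le> exp 100 * (c * exp (- 2 * c * S))" unfolding pe .
  show ?thesis using 1 2 by (rule conjI)
qed

end

context cfrac
begin

lemma bound_n:
  assumes n: "n \<ge> 5"
  shows "exp (-100) * (cf_c \<alpha> n * exp (- 2 * cf_c \<alpha> n *
          (\<Sum>t\<in>{1..<M_idx \<alpha> n}. D_sum t (alpha_minus \<alpha> n) / (real t * (real t + 1)))))
         \<le> P_prod (cf_q \<alpha> n) \<alpha> \<and>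
       P_prod (cf_q \<alpha> n) \<alpha> \<le>
       exp 100 * (cf_c \<alpha> n * exp (- 2 * cf_c \<alpha> n *
          (\<Sum>t\<in>{1..<M_idx \<alpha> n}. D_sum t (alpha_minus \<alpha> n) / (real t * (real t + 1)))))"
proof -
  obtain m where nm: "n = Suc m" using n by (cases n) auto
  have m4: "m \<ge> 4" using n nm by simp
  define q where "q = qq n"
  define q' where "q' = qq m"
  define p where "p = pp n"
  define p' where "p' = pp m"
  define e where "e = int p * int q' - int p' * int q"
  define s where "s = (if e = 1 then q' else q - q')"
  define A where "A = AP n"
  define c where "c = cf_c \<alpha> n"
  have q4: "q \<ge> 4" using qq_ge(1)[of n] n nm by (simp add: q_def)
  have q'1: "q' \<ge> 1" using qq_ge(2)[of m] m4 by (simp add: q'_def)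
  have q'q: "q' < q"
  proof -
    define m0 where "m0 = m - 2"
    have "m = Suc (Suc m0)" using m4 by (simp add: m0_def)
    then show ?thesis using qq_lt[of m0] nm by (simp add: q_def q'_def)
  qed
  have ee: "e = (-1) ^ n" using det[of m] nm by (simp add: e_def p_def p'_def q_def q'_def)
  have e1: "e = 1 \<or> e = -1" unfolding ee by (cases "even n") (simp_all add: neg_one_even_power neg_one_odd_power)
  have ps: "(p * s) mod q = 1"
  proof (cases "e = 1")
    case True
    then have "int (p * q') = int (p' * q) + 1" by (simp add: e_def)
    then have pq: "p * q' = 1 + p' * q" by linarith
    have "(1 + p' * q) mod q = 1 mod q" by (rule mod_mult_self1)
    then show ?thesis using True q4 pq by (simp add: s_def)
  next
    case False
    then have em: "e = -1" using e1 by simp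
    have "int (p * s) = int p * (int q - int q')" using False q'q by (simp add: s_def of_nat_diff)
    also have "\<dots> = (int p - int p') * int q + 1" using em by (simp add: e_def algebra_simps)
    finally have "int (p * s) mod int q = ((int p - int p') * int q + 1) mod int q" by simp
    also have "\<dots> = 1" using q4 by simp
    finally have "int ((p * s) mod q) = 1" by (simp add: zmod_int)
    then show ?thesis by simp
  qed
  have A1: "A > 1" using AP_gt1 nm by (simp add: A_def)
  have am: "alpha_minus \<alpha> n = real q' / real q" using alpha_minus_eq[of m] nm by (simp add: q_def q'_def)
  have cdef: "c = 1 / (A + real q' / real q)" by (simp add: c_def cf_c_def A_def am)
  have th: "real q * \<alpha> - real p = - of_int e * c / real q"
  proof -
    have cv: "\<alpha> = (real p * A + real p') / (real q * A + real q')"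
      unfolding p_def p'_def q_def q'_def A_def nm by (rule conv)
    have qp: "real q > 0" using q4 by simp
    have den: "real q * A + real q' > 0" using qp A1 by (smt (verit) mult_pos_pos of_nat_0_le_iff)
    have "real q * \<alpha> - real p = (real q * real p' - real p * real q') / (real q * A + real q')"
      unfolding cv using den by (simp add: field_simps)
    also have "real q * real p' - real p * real q' = - of_int e" by (simp add: e_def)
    also have "c / real q = 1 / (real q * A + real q')"
    proof -
      have d: "A + real q' / real q = (real q * A + real q') / real q" using qp by (simp add: field_simps)
      have "c = real q / (real q * A + real q')" by (simp add: cdef d)
      then show ?thesis using qp by simp
    qed
    then have "- of_int e / (real q * A + real q') = - of_int e * c / real q"
    proof -
      assume cq: "c / real q = 1 / (real q * A + real q')"
      have "- of_int e * c / real q = - of_int e * (c / real q)" by (rule times_divide_eq_right[symmetric])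
      also have "\<dots> = - of_int e / (real q * A + real q')" unfolding cq by simp
      finally show ?thesis by simp
    qed
    finally show ?thesis .
  qed
  interpret C: core q q' p s e \<alpha> A c
    by unfold_locales (use q4 q'1 q'q e1 ps A1 cdef th in \<open>simp_all add: s_def\<close>)
  have S: "C.S = (\<Sum>t\<in>{1..<M_idx \<alpha> n}. D_sum t (alpha_minus \<alpha> n) / (real t * (real t + 1)))"
  proof -
    have Mi: "M_idx \<alpha> n = (q - 1) div 2" by (simp add: M_idx_def q_def)
    show ?thesis unfolding C.S_def C.M_def Mi C.\<beta>_def am ..
  qed
  show ?thesis using C.sandwich unfolding S by (simp add: c_def q_def)
qed

end



theorem theorem1p1:
  fixes \<alpha> :: real
  assumes "0 < \<alpha>" and "\<alpha> < 1" and "\<alpha> \<notin> \<rat>"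
  shows "\<exists>c C. 0 < c \<and> c \<le> C \<and>
    (\<forall>\<^sub>F n in sequentially.
       c * (cf_c \<alpha> n * exp (- 2 * cf_c \<alpha> n *
          (\<Sum>t\<in>{1..<M_idx \<alpha> n}. D_sum t (alpha_minus \<alpha> n) / (real t * (real t + 1)))))
         \<le> P_prod (cf_q \<alpha> n) \<alpha> \<and>
       P_prod (cf_q \<alpha> n) \<alpha> \<le>
       C * (cf_c \<alpha> n * exp (- 2 * cf_c \<alpha> n *
          (\<Sum>t\<in>{1..<M_idx \<alpha> n}. D_sum t (alpha_minus \<alpha> n) / (real t * (real t + 1))))))"
proof -
  interpret cfrac \<alpha> using assms by unfold_locales
  show ?thesis
  proof (intro exI conjI)
    show "0 < exp (-100::real)" by simp
    show "exp (-100::real) \<le> exp 100" by simp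
    show "\<forall>\<^sub>F n in sequentially.
       exp (-100) * (cf_c \<alpha> n * exp (- 2 * cf_c \<alpha> n *
          (\<Sum>t\<in>{1..<M_idx \<alpha> n}. D_sum t (alpha_minus \<alpha> n) / (real t * (real t + 1)))))
         \<le> P_prod (cf_q \<alpha> n) \<alpha> \<and>
       P_prod (cf_q \<alpha> n) \<alpha> \<le>
       exp 100 * (cf_c \<alpha> n * exp (- 2 * cf_c \<alpha> n *
          (\<Sum>t\<in>{1..<M_idx \<alpha> n}. D_sum t (alpha_minus \<alpha> n) / (real t * (real t + 1)))))"
      by (rule eventually_sequentiallyI[of 5]) (rule bound_n)
  qed
qed

end
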